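(* For each $\otimes\in\{\mathrm{del},\mathrm{add},\mathrm{edit}\}$, $\textsc{RM}^{\otimes}_{\mathrm{undir}}(a)\not\subseteq\mathrm{AC}^0$, i.e. some sentence $\phi=\forall x\,\psi$ with $\psi$ quantifier-free over a binary relation $E$ yields a problem $\textsc{RM}^{\otimes}_{\mathrm{undir}}(\phi)$ not in $\mathrm{AC}^0$.
   Context: An undirected graph is $(V,E)$ with $E\subseteq V\times V$ symmetric (self-loops allowed). For $S\subseteq V\times V$, $\|S\|=|\{\{u,v\}:(u,v)\in S\}|$. For a first-order sentence $\phi$ over $\{E\}$, $\textsc{RM}^{\mathrm{edit}}_{\mathrm{undir}}(\phi)$: given an undirected graph $(V,E)$ and $k\in\mathbb N$, is there $S$ with $\|S\|\le k$ such that $(V,E\triangle S)$ is undirected and satisfies $\phi$; del (resp. add) versions require $S\subseteq E$ (resp. $S\cap E=\emptyset$). $\mathrm{AC}^0$: problems decided by constant-depth polynomial-size unbounded fan-in and/or/not circuit families. *)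

theory Defs
  imports Main
begin

datatype fo =
    EAtom nat nat
  | EqAtom nat nat
  | FNot fo
  | FAnd fo fo
  | FOr fo fo
  | FEx nat fo
  | FAll nat fo

fun sat :: "'a set \<Rightarrow> ('a \<times> 'a) set \<Rightarrow> (nat \<Rightarrow> 'a) \<Rightarrow> fo \<Rightarrow> bool" where
  "sat V E \<sigma> (EAtom i j) = ((\<sigma> i, \<sigma> j) \<in> E)"
| "sat V E \<sigma> (EqAtom i j) = (\<sigma> i = \<sigma> j)"
| "sat V E \<sigma> (FNot \<phi>) = (\<not> sat V E \<sigma> \<phi>)"
| "sat V E \<sigma> (FAnd \<phi> \<psi>) = (sat V E \<sigma> \<phi> \<and> sat V E \<sigma> \<psi>)"
| "sat V E \<sigma> (FOr \<phi> \<psi>) = (sat V E \<sigma> \<phi> \<or> sat V E \<sigma> \<psi>)"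
| "sat V E \<sigma> (FEx x \<phi>) = (\<exists>a\<in>V. sat V E (\<sigma>(x := a)) \<phi>)"
| "sat V E \<sigma> (FAll x \<phi>) = (\<forall>a\<in>V. sat V E (\<sigma>(x := a)) \<phi>)"

fun free_vars :: "fo \<Rightarrow> nat set" where
  "free_vars (EAtom i j) = {i, j}"
| "free_vars (EqAtom i j) = {i, j}"
| "free_vars (FNot \<phi>) = free_vars \<phi>"
| "free_vars (FAnd \<phi> \<psi>) = free_vars \<phi> \<union> free_vars \<psi>"
| "free_vars (FOr \<phi> \<psi>) = free_vars \<phi> \<union> free_vars \<psi>"
| "free_vars (FEx x \<phi>) = free_vars \<phi> - {x}"
| "free_vars (FAll x \<phi>) = free_vars \<phi> - {x}"

fun qfree :: "fo \<Rightarrow> bool" where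
  "qfree (EAtom i j) = True"
| "qfree (EqAtom i j) = True"
| "qfree (FNot \<phi>) = qfree \<phi>"
| "qfree (FAnd \<phi> \<psi>) = (qfree \<phi> \<and> qfree \<psi>)"
| "qfree (FOr \<phi> \<psi>) = (qfree \<phi> \<and> qfree \<psi>)"
| "qfree (FEx x \<phi>) = False"
| "qfree (FAll x \<phi>) = False"

text \<open>A sentence is true in a structure (free variables are absent, so the
  assignment is irrelevant; we fix an arbitrary one).\<close>
definition models :: "'a set \<Rightarrow> ('a \<times> 'a) set \<Rightarrow> fo \<Rightarrow> bool" where
  "models V E \<phi> = sat V E (\<lambda>_. undefined) \<phi>"

definition in_frag_a :: "fo \<Rightarrow> bool" where
  "in_frag_a \<phi> = (\<exists>x \<psi>. \<phi> = FAll x \<psi> \<and> qfree \<psi> \<and> free_vars \<psi> \<subseteq> {x})"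

definition undirected :: "'a set \<Rightarrow> ('a \<times> 'a) set \<Rightarrow> bool" where
  "undirected V E = (E \<subseteq> V \<times> V \<and> sym E)"

definition edge_norm :: "('a \<times> 'a) set \<Rightarrow> nat" where
  "edge_norm S = card {{u, v} | u v. (u, v) \<in> S}"

datatype mode = Del | Add | Edit

definition mode_ok :: "mode \<Rightarrow> ('a \<times> 'a) set \<Rightarrow> ('a \<times> 'a) set \<Rightarrow> bool" where
  "mode_ok m E S = (case m of Del \<Rightarrow> S \<subseteq> E | Add \<Rightarrow> S \<inter> E = {} | Edit \<Rightarrow> True)"

definition RM_undir :: "mode \<Rightarrow> fo \<Rightarrow> 'a set \<Rightarrow> ('a \<times> 'a) set \<Rightarrow> nat \<Rightarrow> bool" where
  "RM_undir m \<phi> V E k =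
     (\<exists>S. S \<subseteq> V \<times> V \<and> edge_norm S \<le> k \<and> mode_ok m E S \<and>
          undirected V ((E - S) \<union> (S - E)) \<and> models V ((E - S) \<union> (S - E)) \<phi>)"

datatype 'v circ = Inp 'v | NotG "'v circ" | AndG "'v circ list" | OrG "'v circ list"

fun ceval :: "('v \<Rightarrow> bool) \<Rightarrow> 'v circ \<Rightarrow> bool" where
  "ceval \<rho> (Inp v) = \<rho> v"
| "ceval \<rho> (NotG c) = (\<not> ceval \<rho> c)"
| "ceval \<rho> (AndG cs) = list_all (ceval \<rho>) cs"
| "ceval \<rho> (OrG cs) = list_ex (ceval \<rho>) cs"

fun csize :: "'v circ \<Rightarrow> nat" where
  "csize (Inp v) = 1"
| "csize (NotG c) = Suc (csize c)"
| "csize (AndG cs) = Suc (sum_list (map csize cs))"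
| "csize (OrG cs) = Suc (sum_list (map csize cs))"

fun cdepth :: "'v circ \<Rightarrow> nat" where
  "cdepth (Inp v) = 0"
| "cdepth (NotG c) = Suc (cdepth c)"
| "cdepth (AndG cs) = Suc (foldr max (map cdepth cs) 0)"
| "cdepth (OrG cs) = Suc (foldr max (map cdepth cs) 0)"

text \<open>Encoding of an instance ({0..<n}, E, k) as bits: adjacency bits Inl (i,j),
  and k in unary threshold form, Inr t true iff t < k (for t < n*n; since
  ||S|| <= n*n always, larger k need not be distinguished).\<close>
definition enc :: "nat \<Rightarrow> (nat \<times> nat) set \<Rightarrow> nat \<Rightarrow> (nat \<times> nat + nat) \<Rightarrow> bool" where
  "enc n E k = (\<lambda>v. case v of
       Inl (i, j) \<Rightarrow> i < n \<and> j < n \<and> (i, j) \<in> E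
     | Inr t \<Rightarrow> t < n * n \<and> t < k)"

text \<open>(Non-uniform) AC0 for a graph problem P (vertex set {0..<n}):
  a family of constant-depth, polynomial-size circuits, one per n.\<close>
definition graph_problem_in_AC0 ::
    "(nat set \<Rightarrow> (nat \<times> nat) set \<Rightarrow> nat \<Rightarrow> bool) \<Rightarrow> bool" where
  "graph_problem_in_AC0 P =
     (\<exists>(C :: nat \<Rightarrow> (nat \<times> nat + nat) circ) d c.
        \<forall>n. cdepth (C n) \<le> d \<and> csize (C n) \<le> c * (n + 1) ^ c \<and>
            (\<forall>E k. undirected {0..<n} E \<longrightarrow>
                   (ceval (enc n E k) (C n) \<longleftrightarrow> P {0..<n} E k)))"

end

theory Submission
  imports Defs "HOL-Library.Numeral_Type" "HOL-Library.FuncSet" "HOL-Real_Asymp.Real_Asymp"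
begin


lemma ex3: "(x::3) = 0 \<or> x = 1 \<or> x = 2"
proof (cases x)
  case (of_int z)
  then have "z = 0 \<or> z = 1 \<or> z = 2" by auto
  then show ?thesis using of_int by auto
qed

lemma sq3: "(x::3) \<noteq> 0 \<Longrightarrow> x * x = 1"
  using ex3[of x] by auto

lemma card3: "card (UNIV :: 3 set) = 3" by simp

definition Y :: "nat set \<Rightarrow> nat set \<Rightarrow> 3" where
  "Y T b = (\<Prod>i\<in>T. if i \<in> b then 2 else 1)"

definition ind :: "bool \<Rightarrow> 3" where "ind P = (if P then 1 else 0)"

inductive nf :: "nat \<Rightarrow> nat \<Rightarrow> (nat set \<Rightarrow> 3) \<Rightarrow> bool" for n where
  nf0: "nf n K (\<lambda>_. 0)"
| nfS: "nf n K f \<Longrightarrow> T \<subseteq> {..<n} \<Longrightarrow> card T \<le> K \<Longrightarrow> nf n K (\<lambda>b. f b + a * Y T b)"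
| nfE: "nf n K f \<Longrightarrow> (\<And>b. b \<subseteq> {..<n} \<Longrightarrow> f b = g b) \<Longrightarrow> nf n K g"

lemma Y_empty[simp]: "Y {} b = 1" by (simp add: Y_def)

lemma Y_sq: "Y T b * Y T b = 1"
proof -
  have "Y T b * Y T b = (\<Prod>i\<in>T. (if i \<in> b then 2 else 1) * (if i \<in> b then 2 else 1))"
    by (simp add: Y_def prod.distrib)
  also have "\<dots> = (\<Prod>i\<in>T. (1::3))" by (rule prod.cong) auto
  finally show ?thesis by simp
qed

lemma Y_mult:
  assumes "finite T" "finite U"
  shows "Y T b * Y U b = Y (T - U \<union> (U - T)) b"
proof -
  have T: "T = (T - U) \<union> (T \<inter> U)" by auto
  have U: "U = (U - T) \<union> (T \<inter> U)" by auto
  have yT: "Y T b = Y (T - U) b * Y (T \<inter> U) b"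
    unfolding Y_def by (subst T, rule prod.union_disjoint) (use assms in auto)
  have yU: "Y U b = Y (U - T) b * Y (T \<inter> U) b"
    unfolding Y_def by (subst U, rule prod.union_disjoint) (use assms in auto)
  have yD: "Y (T - U \<union> (U - T)) b = Y (T - U) b * Y (U - T) b"
    unfolding Y_def by (rule prod.union_disjoint) (use assms in auto)
  show ?thesis unfolding yT yU yD
    by (metis (no_types, lifting) Y_sq mult.assoc mult.commute mult.right_neutral)
qed

lemma nf_mono: "nf n K f \<Longrightarrow> K \<le> K' \<Longrightarrow> nf n K' f"
proof (induction rule: nf.induct)
  case nf0 show ?case by (rule nf.nf0)
next
  case (nfS K f T a) then show ?case by (auto intro: nf.nfS)
next
  case (nfE K f g) then show ?case by (auto intro: nf.nfE)
qed

lemma nf_add: "nf n K g \<Longrightarrow> nf n K f \<Longrightarrow> nf n K (\<lambda>b. f b + g b)"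
proof (induction rule: nf.induct)
  case nf0 then show ?case by simp
next
  case (nfS K g T a)
  then have "nf n K (\<lambda>b. (f b + g b) + a * Y T b)" by (auto intro: nf.nfS)
  then show ?case by (simp add: add.assoc)
next
  case (nfE K g g')
  then show ?case by (auto intro!: nf.nfE[of n K "\<lambda>b. f b + g b"])
qed

lemma nf_scale: "nf n K f \<Longrightarrow> nf n K (\<lambda>b. c * f b)"
proof (induction rule: nf.induct)
  case nf0 then show ?case by (simp add: nf.nf0)
next
  case (nfS K f T a)
  then have "nf n K (\<lambda>b. c * f b + (c * a) * Y T b)" by (auto intro: nf.nfS)
  then show ?case by (simp add: algebra_simps)
next
  case (nfE K f g)
  then show ?case by (auto intro!: nf.nfE[of n K "\<lambda>b. c * f b"])
qed

lemma nf_const: "nf n K (\<lambda>_. c)"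
proof -
  have "nf n K (\<lambda>b. 0 + c * Y {} b)" by (rule nf.nfS[OF nf.nf0]) auto
  then show ?thesis by simp
qed

lemma nf_Y: "T \<subseteq> {..<n} \<Longrightarrow> nf n (card T) (Y T)"
proof -
  assume "T \<subseteq> {..<n}"
  then have "nf n (card T) (\<lambda>b. 0 + 1 * Y T b)" by (intro nf.nfS[OF nf.nf0]) auto
  then show ?thesis by simp
qed

lemma nf_mulY: "nf n K f \<Longrightarrow> U \<subseteq> {..<n} \<Longrightarrow> nf n (K + card U) (\<lambda>b. f b * Y U b)"
proof (induction rule: nf.induct)
  case nf0 then show ?case by (simp add: nf.nf0)
next
  case (nfS K f T a)
  have fin: "finite T" "finite U" using nfS finite_subset by auto
  have c: "card (T - U \<union> (U - T)) \<le> K + card U"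
  proof -
    have "card (T - U \<union> (U - T)) \<le> card (T - U) + card (U - T)" by (rule card_Un_le)
    also have "\<dots> \<le> card T + card U" using fin by (intro add_mono card_mono) auto
    finally show ?thesis using nfS by linarith
  qed
  have "nf n (K + card U) (\<lambda>b. f b * Y U b + a * Y (T - U \<union> (U - T)) b)"
    using nfS c by (intro nf.nfS) auto
  then show ?case using Y_mult[OF fin] by (simp add: algebra_simps)
next
  case (nfE K f g)
  then show ?case by (auto intro!: nf.nfE[of n _ "\<lambda>b. f b * Y U b"])
qed

lemma nf_mult: "nf n E g \<Longrightarrow> nf n K f \<Longrightarrow> nf n (K + E) (\<lambda>b. f b * g b)"
proof (induction rule: nf.induct)
  case nf0 then show ?case by (simp add: nf.nf0)
next
  case (nfS E g T a)
  have 1: "nf n (K + E) (\<lambda>b. f b * g b)" using nfS by auto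
  have "nf n (K + card T) (\<lambda>b. f b * Y T b)" using nfS by (intro nf_mulY) auto
  then have "nf n (K + E) (\<lambda>b. f b * Y T b)" using nfS by (elim nf_mono) auto
  then have 2: "nf n (K + E) (\<lambda>b. a * (f b * Y T b))" by (rule nf_scale)
  have "nf n (K + E) (\<lambda>b. f b * g b + a * (f b * Y T b))" using nf_add[OF 2 1] .
  moreover have "(\<lambda>b. f b * g b + a * (f b * Y T b)) = (\<lambda>b. f b * (g b + a * Y T b))"
    by (rule ext) (simp add: distrib_left mult.left_commute)
  ultimately show ?case by simp
next
  case (nfE E g g')
  then show ?case by (auto intro!: nf.nfE[of n _ "\<lambda>b. f b * g b"])
qed

lemma nf_sum: "finite A \<Longrightarrow> (\<And>x. x \<in> A \<Longrightarrow> nf n K (f x)) \<Longrightarrow> nf n K (\<lambda>b. \<Sum>x\<in>A. f x b)"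
proof (induction rule: finite_induct)
  case empty then show ?case by (simp add: nf.nf0)
next
  case (insert x F)
  then have "nf n K (\<lambda>b. f x b + (\<Sum>y\<in>F. f y b))" by (intro nf_add) auto
  moreover have "(\<lambda>b. f x b + (\<Sum>y\<in>F. f y b)) = (\<lambda>b. \<Sum>y\<in>insert x F. f y b)"
    using insert(1,2) by (intro ext) simp
  ultimately show ?case by simp
qed

lemma nf_prod: "finite A \<Longrightarrow> (\<And>x. x \<in> A \<Longrightarrow> nf n K (f x)) \<Longrightarrow> nf n (K * card A) (\<lambda>b. \<Prod>x\<in>A. f x b)"
proof (induction rule: finite_induct)
  case empty then show ?case by (simp add: nf_const)
next
  case (insert x F)
  then have "nf n (K + K * card F) (\<lambda>b. f x b * (\<Prod>y\<in>F. f y b))" by (intro nf_mult) auto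
  moreover have "(\<lambda>b. f x b * (\<Prod>y\<in>F. f y b)) = (\<lambda>b. \<Prod>y\<in>insert x F. f y b)"
    using insert(1,2) by (intro ext) simp
  moreover have "K + K * card F = K * card (insert x F)" using insert(1,2) by simp
  ultimately show ?case by simp
qed

lemma nf_var: "nf n 1 (\<lambda>b. ind (i \<in> b))"
proof (cases "i < n")
  case True
  have "nf n 1 (\<lambda>b. (0 + (-1) * Y {} b) + 1 * Y {i} b)"
    using True by (intro nf.nfS nf.nf0) auto
  moreover have "(0 + (-1) * Y {} b) + 1 * Y {i} b = ind (i \<in> b)" for b
    by (simp add: Y_def ind_def)
  ultimately show ?thesis by simp
next
  case False
  show ?thesis by (rule nf.nfE[OF nf.nf0]) (use False in \<open>auto simp: ind_def\<close>)
qed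

lemma nf_one_minus: "nf n K f \<Longrightarrow> nf n K (\<lambda>b. 1 - f b)"
proof -
  assume "nf n K f"
  then have "nf n K (\<lambda>b. (-1) * f b + 1)" by (intro nf_add nf_scale nf_const)
  then show ?thesis by simp
qed

definition Mon :: "nat \<Rightarrow> nat \<Rightarrow> nat set set" where
  "Mon n K = {T. T \<subseteq> {..<n} \<and> card T \<le> K}"

lemma finite_Mon: "finite (Mon n K)"
  unfolding Mon_def by (rule finite_subset[of _ "Pow {..<n}"]) auto

lemma nf_repr: "nf n K f \<Longrightarrow> \<exists>c. \<forall>b. b \<subseteq> {..<n} \<longrightarrow> f b = (\<Sum>T\<in>Mon n K. c T * Y T b)"
proof (induction rule: nf.induct)
  case nf0 then show ?case by (intro exI[of _ "\<lambda>_. 0"]) simp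
next
  case (nfS K f T a)
  then obtain c where c: "\<forall>b. b \<subseteq> {..<n} \<longrightarrow> f b = (\<Sum>T\<in>Mon n K. c T * Y T b)" by blast
  have TM: "T \<in> Mon n K" using nfS by (auto simp: Mon_def)
  show ?case
  proof (intro exI[of _ "c(T := c T + a)"] allI impI)
    fix b :: "nat set" assume b: "b \<subseteq> {..<n}"
    have "(\<Sum>U\<in>Mon n K. (c(T := c T + a)) U * Y U b)
        = (\<Sum>U\<in>Mon n K. c U * Y U b + (if U = T then a * Y T b else 0))"
      by (rule sum.cong) (auto simp: algebra_simps)
    also have "\<dots> = (\<Sum>U\<in>Mon n K. c U * Y U b) + a * Y T b"
      using TM finite_Mon by (simp add: sum.distrib)
    finally show "f b + a * Y T b = (\<Sum>U\<in>Mon n K. (c(T := c T + a)) U * Y U b)"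
      using c b by simp
  qed
next
  case (nfE K f g)
  from nfE.IH obtain c where c: "\<forall>b. b \<subseteq> {..<n} \<longrightarrow> f b = (\<Sum>T\<in>Mon n K. c T * Y T b)" by blast
  have "\<forall>b. b \<subseteq> {..<n} \<longrightarrow> g b = (\<Sum>T\<in>Mon n K. c T * Y T b)" using c nfE.hyps(2) by simp
  then show ?case by blast
qed



definition delta :: "nat \<Rightarrow> nat set \<Rightarrow> nat set \<Rightarrow> 3" where
  "delta n a b = (\<Prod>i\<in>{..<n}. if i \<in> a then ind (i \<in> b) else 1 - ind (i \<in> b))"

lemma nf_delta: "nf n n (delta n a)"
proof -
  have "nf n (1 * card {..<n}) (\<lambda>b. \<Prod>i\<in>{..<n}. if i \<in> a then ind (i \<in> b) else 1 - ind (i \<in> b))"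
  proof (rule nf_prod)
    fix i assume "i \<in> {..<n}"
    show "nf n 1 (\<lambda>b. if i \<in> a then ind (i \<in> b) else 1 - ind (i \<in> b))"
      using nf_var[of n i] nf_one_minus[OF nf_var[of n i]] by (cases "i \<in> a") simp_all
  qed simp
  then show ?thesis by (simp add: delta_def[abs_def])
qed

lemma delta_eq: "a \<subseteq> {..<n} \<Longrightarrow> b \<subseteq> {..<n} \<Longrightarrow> delta n a b = (if a = b then 1 else 0)"
proof (cases "a = b")
  case True
  then show ?thesis unfolding delta_def by (simp, intro prod.neutral) (auto simp: ind_def)
next
  case False
  assume a: "a \<subseteq> {..<n}" and b: "b \<subseteq> {..<n}"
  then obtain i where i: "i < n" "(i \<in> a) \<noteq> (i \<in> b)" using False by blast
  have "delta n a b = 0" unfolding delta_def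
    by (rule prod_zero) (use i in \<open>auto simp: ind_def intro!: bexI[of _ i]\<close>)
  then show ?thesis using False by simp
qed

lemma all_nf: "nf n n g"
proof -
  have "nf n n (\<lambda>b. \<Sum>a\<in>Pow {..<n}. g a * delta n a b)"
    by (intro nf_sum nf_scale nf_delta) auto
  then show ?thesis
  proof (rule nf.nfE)
    fix b :: "nat set" assume b: "b \<subseteq> {..<n}"
    have "(\<Sum>a\<in>Pow {..<n}. g a * delta n a b) = (\<Sum>a\<in>Pow {..<n}. if a = b then g a else 0)"
      by (rule sum.cong) (use b in \<open>auto simp: delta_eq\<close>)
    also have "\<dots> = g b" using b by simp
    finally show "(\<Sum>a\<in>Pow {..<n}. g a * delta n a b) = g b" .
  qed
qed

lemma pow2_3: "(2::3) ^ k = 1 + ind (odd k)"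
  by (induction k) (auto simp: ind_def)

lemma Y_all: "b \<subseteq> {..<n} \<Longrightarrow> Y {..<n} b = 1 + ind (odd (card b))"
proof -
  assume b: "b \<subseteq> {..<n}"
  have "Y {..<n} b = (\<Prod>i\<in>{..<n} \<inter> {x. x \<in> b}. 2) * (\<Prod>i\<in>{..<n} \<inter> - {x. x \<in> b}. 1)"
    unfolding Y_def by (rule prod.If_cases) simp
  also have "{..<n} \<inter> {x. x \<in> b} = b" using b by auto
  finally show ?thesis by (simp add: pow2_3)
qed

lemma degree_reduce:
  assumes nfP: "nf n D P" and PG: "\<forall>b\<in>G. P b = ind (odd (card b))"
    and G: "G \<subseteq> Pow {..<n}" and n: "n = 2*m"
  shows "\<exists>f. nf n (m + D) f \<and> (\<forall>b\<in>G. f b = g b)"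
proof -
  obtain c where c: "\<forall>b. b \<subseteq> {..<n} \<longrightarrow> g b = (\<Sum>T\<in>Mon n n. c T * Y T b)"
    using nf_repr[OF all_nf] by blast
  define h where "h T b = (if card T \<le> m then Y T b else (1 + P b) * Y ({..<n} - T) b)" for T b
  define f where "f b = (\<Sum>T\<in>Mon n n. c T * h T b)" for b
  have nfh: "nf n (m + D) (h T)" if T: "T \<in> Mon n n" for T
  proof (cases "card T \<le> m")
    case True
    then have "h T = Y T" by (simp add: h_def[abs_def])
    then show ?thesis using T True by (auto simp: Mon_def intro: nf_mono[OF nf_Y])
  next
    case False
    then have hT: "h T = (\<lambda>b. (1 + P b) * Y ({..<n} - T) b)" by (simp add: h_def[abs_def])
    have T': "T \<subseteq> {..<n}" using T by (simp add: Mon_def)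
    have cc: "card ({..<n} - T) \<le> m"
      using False T' n by (simp add: card_Diff_subset finite_subset)
    have "nf n (D + card ({..<n} - T)) (\<lambda>b. (1 + P b) * Y ({..<n} - T) b)"
      by (intro nf_mulY nf_add nfP nf_const) auto
    then show ?thesis unfolding hT by (rule nf_mono) (use cc in auto)
  qed
  have "nf n (m + D) f" unfolding f_def
    by (intro nf_sum nf_scale nfh finite_Mon)
  moreover have "\<forall>b\<in>G. f b = g b"
  proof
    fix b assume bG: "b \<in> G"
    then have b: "b \<subseteq> {..<n}" using G by auto
    have hT: "h T b = Y T b" if T: "T \<in> Mon n n" for T
    proof (cases "card T \<le> m")
      case True then show ?thesis by (simp add: h_def)
    next
      case False
      have T': "T \<subseteq> {..<n}" using T by (simp add: Mon_def)
      have "P b = ind (odd (card b))" using PG bG by blast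
      then have Pb: "1 + P b = Y {..<n} b" using Y_all[OF b] by simp
      have "h T b = (if card T \<le> m then Y T b else (1 + P b) * Y ({..<n} - T) b)"
        by (simp only: h_def)
      also have "\<dots> = (1 + P b) * Y ({..<n} - T) b" using False by (rule if_not_P)
      also have "\<dots> = Y {..<n} b * Y ({..<n} - T) b" by (simp only: Pb)
      also have "\<dots> = Y ({..<n} - ({..<n} - T) \<union> (({..<n} - T) - {..<n})) b"
        by (rule Y_mult) auto
      also have "{..<n} - ({..<n} - T) \<union> (({..<n} - T) - {..<n}) = T" using T' by auto
      finally show ?thesis .
    qed
    have "f b = (\<Sum>T\<in>Mon n n. c T * Y T b)" unfolding f_def
      by (rule sum.cong) (simp_all add: hT)
    then show "f b = g b" using c b by simp
  qed
  ultimately show ?thesis by blast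
qed

lemma count_bound:
  assumes G: "G \<subseteq> Pow {..<n}" and rep: "\<And>g. \<exists>f. nf n K f \<and> (\<forall>b\<in>G. f b = g b)"
  shows "card G \<le> card (Mon n K)"
proof -
  have finG: "finite G" using G finite_subset by blast
  define F where "F = G \<rightarrow>\<^sub>E (UNIV :: 3 set)"
  define \<Phi> where "\<Phi> c = restrict (\<lambda>b. \<Sum>T\<in>Mon n K. c T * Y T b) G" for c
  have cF: "card F = 3 ^ card G" unfolding F_def using finG by (simp add: card_PiE)
  have sub: "F \<subseteq> \<Phi> ` (Mon n K \<rightarrow>\<^sub>E (UNIV :: 3 set))"
  proof
    fix h assume hF: "h \<in> F"
    obtain f where f: "nf n K f" "\<forall>b\<in>G. f b = h b" using rep by blast
    obtain c where c: "\<forall>b. b \<subseteq> {..<n} \<longrightarrow> f b = (\<Sum>T\<in>Mon n K. c T * Y T b)"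
      using nf_repr[OF f(1)] by blast
    have "h = \<Phi> (restrict c (Mon n K))"
    proof
      fix b show "h b = \<Phi> (restrict c (Mon n K)) b"
      proof (cases "b \<in> G")
        case True
        then have bb: "b \<subseteq> {..<n}" using G by auto
        have "h b = (\<Sum>T\<in>Mon n K. c T * Y T b)" using f c bb True by metis
        also have "\<dots> = (\<Sum>T\<in>Mon n K. restrict c (Mon n K) T * Y T b)" by (rule sum.cong) auto
        finally show ?thesis using True by (simp add: \<Phi>_def)
      next
        case False
        then show ?thesis using hF by (simp add: F_def \<Phi>_def PiE_def extensional_def)
      qed
    qed
    then show "h \<in> \<Phi> ` (Mon n K \<rightarrow>\<^sub>E UNIV)" by auto
  qed
  have "3 ^ card G \<le> card (\<Phi> ` (Mon n K \<rightarrow>\<^sub>E (UNIV :: 3 set)))"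
    unfolding cF[symmetric] by (rule card_mono[OF _ sub]) (simp add: finite_Mon finite_PiE)
  also have "\<dots> \<le> card (Mon n K \<rightarrow>\<^sub>E (UNIV :: 3 set))" by (rule card_image_le) (simp add: finite_Mon finite_PiE)
  also have "\<dots> = 3 ^ card (Mon n K)" by (simp add: card_PiE finite_Mon)
  finally show ?thesis by (rule power_le_imp_le_exp[rotated]) simp
qed



lemma zero_sets_bound:
  fixes v :: "nat \<Rightarrow> 3"
  assumes i0: "i0 < k" "v i0 = 1"
  shows "2 * card {A \<in> Pow {..<k}. (\<Sum>i\<in>A. v i) = 0} \<le> 2 ^ k"
proof -
  define Z where "Z = {A \<in> Pow {..<k}. (\<Sum>i\<in>A. v i) = 0}"
  define fl where "fl A = (if i0 \<in> A then A - {i0} else insert i0 A)" for A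
  have inv: "fl (fl A) = A" for A by (auto simp: fl_def)
  have inj: "inj_on fl Z" by (rule inj_on_inverseI[where g = fl]) (rule inv)
  have img: "fl ` Z \<subseteq> Pow {..<k} - Z"
  proof
    fix B assume "B \<in> fl ` Z"
    then obtain A where A: "A \<in> Z" "B = fl A" by blast
    have Ak: "A \<subseteq> {..<k}" and s0: "(\<Sum>i\<in>A. v i) = 0" using A by (auto simp: Z_def)
    have finA: "finite A" using Ak finite_subset by blast
    have "B \<subseteq> {..<k}" using A Ak i0 by (auto simp: fl_def)
    moreover have "(\<Sum>i\<in>B. v i) \<noteq> 0"
    proof (cases "i0 \<in> A")
      case True
      then have "(\<Sum>i\<in>A. v i) = v i0 + (\<Sum>i\<in>A - {i0}. v i)" using finA by (simp add: sum.remove)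
      then have "1 + (\<Sum>i\<in>B. v i) = 0" using s0 True A i0 by (simp add: fl_def)
      then show ?thesis by auto
    next
      case False
      then have "(\<Sum>i\<in>B. v i) = v i0 + (\<Sum>i\<in>A. v i)" using finA A by (simp add: fl_def)
      then show ?thesis using s0 i0 by simp
    qed
    ultimately show "B \<in> Pow {..<k} - Z" by (auto simp: Z_def)
  qed
  have finZ: "finite Z" by (auto simp: Z_def)
  have "card Z + card (fl ` Z) = card (Z \<union> fl ` Z)"
    using img finZ by (intro card_Un_disjoint[symmetric]) auto
  also have "\<dots> \<le> card (Pow {..<k})" using img by (intro card_mono) (auto simp: Z_def)
  also have "\<dots> = 2 ^ k" by (simp add: card_Pow)
  finally show ?thesis using card_image[OF inj] by (simp add: Z_def)
qed

lemma card_filter_sum: "finite A \<Longrightarrow> card {x \<in> A. P x} = (\<Sum>x\<in>A. if P x then 1 else 0)"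
proof -
  assume "finite A"
  then have "sum (\<lambda>_. 1::nat) {x \<in> A. P x} = (\<Sum>x\<in>A. if P x then 1 else 0)" by (rule sum.inter_filter)
  then show ?thesis by simp
qed

lemma or_approx:
  fixes p :: "nat \<Rightarrow> nat set \<Rightarrow> 3" and t :: "nat \<Rightarrow> nat set \<Rightarrow> bool"
  assumes nfp: "\<And>i. i < k \<Longrightarrow> nf n D (p i)"
  shows "\<exists>q. nf n (2*l*D) q \<and> 2^l * card {b \<in> Pow {..<n}. q b \<noteq> ind (\<exists>i<k. t i b)}
           \<le> 2^l * (\<Sum>i<k. card {b \<in> Pow {..<n}. p i b \<noteq> ind (t i b)}) + 2^n"
proof -
  define err where "err i = {b \<in> Pow {..<n}. p i b \<noteq> ind (t i b)}" for i
  define errs where "errs = (\<Union>i<k. err i)"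
  define Tup where "Tup = PiE {..<l} (\<lambda>_. Pow {..<k})"
  define q where "q S b = 1 - (\<Prod>j<l. 1 - (\<Sum>i\<in>S j. p i b) * (\<Sum>i\<in>S j. p i b))" for S b
  define z where "z b A = ((\<Sum>i\<in>A. ind (t i b)) = 0)" for b A
  define B1 where "B1 = {b \<in> Pow {..<n} - errs. \<exists>i<k. t i b}"
  define bad where "bad S = {b \<in> B1. \<forall>j<l. z b (S j)}" for S
  have STup: "S j \<subseteq> {..<k}" "finite (S j)" if "S \<in> Tup" "j < l" for S j
    using that finite_subset by (auto simp: Tup_def PiE_def Pi_def)
  have nfq: "nf n (2*l*D) (q S)" if S: "S \<in> Tup" for S
  proof -
    have "nf n ((D + D) * card {..<l}) (\<lambda>b. \<Prod>j<l. 1 - (\<Sum>i\<in>S j. p i b) * (\<Sum>i\<in>S j. p i b))"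
    proof (rule nf_prod)
      fix j assume j: "j \<in> {..<l}"
      have "nf n D (\<lambda>b. \<Sum>i\<in>S j. p i b)"
        using STup[OF S] j nfp by (intro nf_sum) auto
      then show "nf n (D + D) (\<lambda>b. 1 - (\<Sum>i\<in>S j. p i b) * (\<Sum>i\<in>S j. p i b))"
        by (intro nf_one_minus nf_mult)
    qed simp
    then have "nf n (2*l*D) (\<lambda>b. \<Prod>j<l. 1 - (\<Sum>i\<in>S j. p i b) * (\<Sum>i\<in>S j. p i b))"
      by (rule nf_mono) simp
    then show ?thesis unfolding q_def[abs_def] by (rule nf_one_minus)
  qed
  have sub: "{b \<in> Pow {..<n}. q S b \<noteq> ind (\<exists>i<k. t i b)} \<subseteq> errs \<union> bad S" if S: "S \<in> Tup" for S
  proof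
    fix b assume bq: "b \<in> {b \<in> Pow {..<n}. q S b \<noteq> ind (\<exists>i<k. t i b)}"
    show "b \<in> errs \<union> bad S"
    proof (rule ccontr)
      assume nb: "b \<notin> errs \<union> bad S"
      then have pe: "p i b = ind (t i b)" if "i < k" for i
        using bq that by (auto simp: errs_def err_def)
      have seq: "(\<Sum>i\<in>S j. p i b) = (\<Sum>i\<in>S j. ind (t i b))" if "j < l" for j
        using STup[OF S that] pe by (intro sum.cong) auto
      show False
      proof (cases "\<exists>i<k. t i b")
        case False
        have "(\<Sum>i\<in>S j. p i b) = 0" if "j < l" for j
          unfolding seq[OF that] using STup[OF S that] False by (intro sum.neutral) (auto simp: ind_def)
        then have "q S b = 0" unfolding q_def by simp
        then show False using bq False by (simp add: ind_def)
      next
        case True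
        then have bB1: "b \<in> B1" using bq nb by (auto simp: B1_def)
        then obtain j where j: "j < l" "\<not> z b (S j)" using nb by (auto simp: bad_def)
        then have "(\<Sum>i\<in>S j. p i b) \<noteq> 0" using seq[OF j(1)] by (simp add: z_def)
        then have "(\<Sum>i\<in>S j. p i b) * (\<Sum>i\<in>S j. p i b) = 1" by (rule sq3)
        then have "(\<Prod>j<l. 1 - (\<Sum>i\<in>S j. p i b) * (\<Sum>i\<in>S j. p i b)) = 0"
          using j by (intro prod_zero) auto
        then have "q S b = 1" unfolding q_def by simp
        then show False using bq True by (simp add: ind_def)
      qed
    qed
  qed
  have finTup: "finite Tup" unfolding Tup_def by (intro finite_PiE) auto
  have cardTup: "card Tup = (2^k)^l" unfolding Tup_def by (simp add: card_PiE card_Pow)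
  have TupNE: "Tup \<noteq> {}"
  proof
    assume "Tup = {}"
    then have "card Tup = 0" by simp
    then show False using cardTup by simp
  qed
  have finB1: "finite B1" by (auto simp: B1_def)
  have cB1: "card B1 \<le> 2^n"
  proof -
    have "card B1 \<le> card (Pow {..<n::nat})" by (intro card_mono) (auto simp: B1_def)
    then show ?thesis by (simp add: card_Pow)
  qed
  define Z where "Z b = {A \<in> Pow {..<k}. z b A}" for b
  have slice: "{S \<in> Tup. \<forall>j<l. z b (S j)} = PiE {..<l} (\<lambda>_. Z b)" for b
    by (auto simp: Tup_def Z_def PiE_def Pi_def)
  have zb: "2^l * card (Z b) ^ l \<le> (2^k)^l" if b: "b \<in> B1" for b
  proof -
    obtain i0 where i0: "i0 < k" "t i0 b" using b by (auto simp: B1_def)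
    have "2 * card (Z b) \<le> 2^k"
      using zero_sets_bound[of i0 k "\<lambda>i. ind (t i b)"] i0 by (simp add: Z_def z_def ind_def)
    then have "(2 * card (Z b)) ^ l \<le> (2^k)^l" by (rule power_mono) simp
    then show ?thesis by (simp add: power_mult_distrib)
  qed
  have ex: "\<exists>S\<in>Tup. 2^l * card (bad S) \<le> 2^n"
  proof (rule ccontr)
    assume "\<not> ?thesis"
    then have lt: "\<And>S. S \<in> Tup \<Longrightarrow> 2^n < 2^l * card (bad S)" by auto
    have "(\<Sum>S\<in>Tup. (2::nat)^n) < (\<Sum>S\<in>Tup. 2^l * card (bad S))"
      using finTup TupNE lt by (intro sum_strict_mono) auto
    also have "(\<Sum>S\<in>Tup. 2^l * card (bad S)) = 2^l * (\<Sum>S\<in>Tup. \<Sum>b\<in>B1. if \<forall>j<l. z b (S j) then 1 else 0)"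
      unfolding bad_def by (simp add: sum_distrib_left card_filter_sum[OF finB1])
    also have "(\<Sum>S\<in>Tup. \<Sum>b\<in>B1. if \<forall>j<l. z b (S j) then 1 else 0)
             = (\<Sum>b\<in>B1. \<Sum>S\<in>Tup. if \<forall>j<l. z b (S j) then 1 else (0::nat))"
      by (rule sum.swap)
    also have "\<dots> = (\<Sum>b\<in>B1. card (Z b) ^ l)"
      by (rule sum.cong) (simp_all add: card_filter_sum[OF finTup, symmetric] slice card_PiE)
    also have "2^l * \<dots> = (\<Sum>b\<in>B1. 2^l * card (Z b) ^ l)" by (simp add: sum_distrib_left)
    also have "\<dots> \<le> (\<Sum>b\<in>B1. (2^k)^l)" by (intro sum_mono zb)
    also have "\<dots> = card B1 * (2^k)^l" by simp
    also have "\<dots> \<le> 2^n * (2^k)^l" using cB1 by (intro mult_right_mono) auto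
    finally show False using cardTup by (simp add: mult.commute)
  qed
  then obtain S where S: "S \<in> Tup" "2^l * card (bad S) \<le> 2^n" by blast
  have finerr: "finite (err i)" for i by (auto simp: err_def)
  have "card {b \<in> Pow {..<n}. q S b \<noteq> ind (\<exists>i<k. t i b)} \<le> card (errs \<union> bad S)"
    using sub[OF S(1)] finerr by (intro card_mono) (auto simp: errs_def bad_def finB1)
  also have "\<dots> \<le> card errs + card (bad S)" by (rule card_Un_le)
  also have "card errs \<le> (\<Sum>i<k. card (err i))" unfolding errs_def by (rule card_UN_le) simp
  finally have "card {b \<in> Pow {..<n}. q S b \<noteq> ind (\<exists>i<k. t i b)} \<le> (\<Sum>i<k. card (err i)) + card (bad S)"
    by simp
  then have "2^l * card {b \<in> Pow {..<n}. q S b \<noteq> ind (\<exists>i<k. t i b)} \<le> 2^l * ((\<Sum>i<k. card (err i)) + card (bad S))"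
    by (rule mult_le_mono2)
  then have "2^l * card {b \<in> Pow {..<n}. q S b \<noteq> ind (\<exists>i<k. t i b)} \<le> 2^l * (\<Sum>i<k. card (err i)) + 2^l * card (bad S)"
    by (simp only: add_mult_distrib2)
  then have "2^l * card {b \<in> Pow {..<n}. q S b \<noteq> ind (\<exists>i<k. t i b)} \<le> 2^l * (\<Sum>i<k. card (err i)) + 2^n"
    using S(2) by linarith
  then show ?thesis using nfq[OF S(1)] unfolding err_def by blast
qed



lemma foldr_max_ge: "x \<in> set xs \<Longrightarrow> (x::nat) \<le> foldr max xs 0"
  by (induction xs) auto

lemma sum_list_nth: "sum_list (map f xs) = (\<Sum>i<length xs. f (xs ! i))"
proof -
  have "sum_list (map f xs) = (\<Sum>i = 0..<length xs. map f xs ! i)"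
    by (simp add: sum_list_sum_nth)
  also have "\<dots> = (\<Sum>i<length xs. f (xs ! i))" by (rule sum.cong) auto
  finally show ?thesis .
qed

lemma ind_not: "ind (\<not> P) = 1 - ind P" by (simp add: ind_def)

lemma err_flip: "{b \<in> A. 1 - f b \<noteq> ind (\<not> x b)} = {b \<in> A. f b \<noteq> ind (x b)}"
  by (simp add: ind_not)

lemma or_circ:
  fixes k :: nat and s :: "nat \<Rightarrow> nat"
  assumes H: "\<And>i. i < k \<Longrightarrow> nf n ((2*l)^M) (P i) \<and> 2^l * card {b \<in> Pow {..<n}. P i b \<noteq> ind (t i b)} \<le> s i * 2^n"
  shows "\<exists>q. nf n ((2*l)^Suc M) q \<and> 2^l * card {b \<in> Pow {..<n}. q b \<noteq> ind (\<exists>i<k. t i b)} \<le> Suc (\<Sum>i<k. s i) * 2^n"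
proof -
  obtain q where q: "nf n (2*l*(2*l)^M) q"
    "2^l * card {b \<in> Pow {..<n}. q b \<noteq> ind (\<exists>i<k. t i b)}
           \<le> 2^l * (\<Sum>i<k. card {b \<in> Pow {..<n}. P i b \<noteq> ind (t i b)}) + 2^n"
    using or_approx[of k n "(2*l)^M" P l t] H by blast
  have "2^l * (\<Sum>i<k. card {b \<in> Pow {..<n}. P i b \<noteq> ind (t i b)})
      = (\<Sum>i<k. 2^l * card {b \<in> Pow {..<n}. P i b \<noteq> ind (t i b)})" by (simp add: sum_distrib_left)
  also have "\<dots> \<le> (\<Sum>i<k. s i * 2^n)" by (intro sum_mono) (use H in auto)
  also have "\<dots> = (\<Sum>i<k. s i) * 2^n" by (simp add: sum_distrib_right)
  finally have "2^l * card {b \<in> Pow {..<n}. q b \<noteq> ind (\<exists>i<k. t i b)} \<le> (\<Sum>i<k. s i) * 2^n + 2^n"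
    using q(2) by linarith
  then have "2^l * card {b \<in> Pow {..<n}. q b \<noteq> ind (\<exists>i<k. t i b)} \<le> Suc (\<Sum>i<k. s i) * 2^n" by simp
  moreover have "nf n ((2*l)^Suc M) q" using q(1) by (simp add: mult.assoc)
  ultimately show ?thesis by blast
qed

lemma approx:
  fixes C :: "'v circ" and \<sigma> :: "nat set \<Rightarrow> 'v \<Rightarrow> bool"
  assumes vars: "\<And>v. nf n 1 (\<lambda>b. ind (\<sigma> b v))" and l: "1 \<le> l"
  shows "\<exists>p. nf n ((2*l)^cdepth C) p \<and> 2^l * card {b \<in> Pow {..<n}. p b \<noteq> ind (ceval (\<sigma> b) C)} \<le> csize C * 2^n"
proof (induction C)
  case (Inp v)
  have "nf n ((2*l)^cdepth (Inp v)) (\<lambda>b. ind (\<sigma> b v))" using vars[of v] by simp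
  moreover have "2^l * card {b \<in> Pow {..<n}. ind (\<sigma> b v) \<noteq> ind (ceval (\<sigma> b) (Inp v))} \<le> csize (Inp v) * 2^n"
    by simp
  ultimately show ?case by blast
next
  case (NotG C)
  then obtain p where p: "nf n ((2*l)^cdepth C) p"
    "2^l * card {b \<in> Pow {..<n}. p b \<noteq> ind (ceval (\<sigma> b) C)} \<le> csize C * 2^n" by blast
  have "nf n ((2*l)^cdepth C) (\<lambda>b. 1 - p b)" using p(1) by (rule nf_one_minus)
  then have "nf n ((2*l)^cdepth (NotG C)) (\<lambda>b. 1 - p b)"
    by (rule nf_mono) (use l in \<open>auto intro: power_increasing\<close>)
  moreover have "2^l * card {b \<in> Pow {..<n}. 1 - p b \<noteq> ind (ceval (\<sigma> b) (NotG C))} \<le> csize (NotG C) * 2^n"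
    using p(2) err_flip[of "Pow {..<n}" p "\<lambda>b. ceval (\<sigma> b) C"] by simp
  ultimately show ?case by blast
next
  case (AndG cs)
  define k where "k = length cs"
  define M where "M = foldr max (map cdepth cs) 0"
  have "\<forall>i. \<exists>p. i < k \<longrightarrow> nf n ((2*l)^cdepth (cs!i)) p \<and>
      2^l * card {b \<in> Pow {..<n}. p b \<noteq> ind (ceval (\<sigma> b) (cs!i))} \<le> csize (cs!i) * 2^n"
  proof
    fix i show "\<exists>p. i < k \<longrightarrow> nf n ((2*l)^cdepth (cs!i)) p \<and>
      2^l * card {b \<in> Pow {..<n}. p b \<noteq> ind (ceval (\<sigma> b) (cs!i))} \<le> csize (cs!i) * 2^n"
    proof (cases "i < k")
      case True
      then have "cs!i \<in> set cs" by (simp add: k_def)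
      from AndG.IH[OF this] show ?thesis by blast
    next
      case False then show ?thesis by blast
    qed
  qed
  from choice[OF this] obtain P where P0: "\<forall>i. i < k \<longrightarrow> nf n ((2*l)^cdepth (cs!i)) (P i) \<and>
      2^l * card {b \<in> Pow {..<n}. P i b \<noteq> ind (ceval (\<sigma> b) (cs!i))} \<le> csize (cs!i) * 2^n"
    by blast
  note P = P0[rule_format]
  have H: "nf n ((2*l)^M) (\<lambda>b. 1 - P i b) \<and>
      2^l * card {b \<in> Pow {..<n}. 1 - P i b \<noteq> ind (\<not> ceval (\<sigma> b) (cs!i))} \<le> csize (cs!i) * 2^n"
    if i: "i < k" for i
  proof
    have "cdepth (cs!i) \<le> M" unfolding M_def using i by (intro foldr_max_ge) (simp add: k_def)
    then have pw: "(2*l)^cdepth (cs!i) \<le> (2*l)^M" using l by (intro power_increasing) auto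
    have "nf n ((2*l)^cdepth (cs!i)) (P i)" using P[OF i] by blast
    then have "nf n ((2*l)^M) (P i)" using pw by (rule nf_mono)
    then show "nf n ((2*l)^M) (\<lambda>b. 1 - P i b)" by (rule nf_one_minus)
    show "2^l * card {b \<in> Pow {..<n}. 1 - P i b \<noteq> ind (\<not> ceval (\<sigma> b) (cs!i))} \<le> csize (cs!i) * 2^n"
      using P[OF i] by (simp only: err_flip)
  qed
  obtain q where q: "nf n ((2*l)^Suc M) q"
    "2^l * card {b \<in> Pow {..<n}. q b \<noteq> ind (\<exists>i<k. \<not> ceval (\<sigma> b) (cs!i))} \<le> Suc (\<Sum>i<k. csize (cs!i)) * 2^n"
    using or_circ[where k=k and l=l and M=M and P="\<lambda>i b. 1 - P i b" and n=n and t="\<lambda>i b. \<not> ceval (\<sigma> b) (cs!i)" and s="\<lambda>i. csize (cs!i)"] H by blast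
  have ev: "ceval (\<sigma> b) (AndG cs) = (\<not> (\<exists>i<k. \<not> ceval (\<sigma> b) (cs!i)))" for b
    by (simp add: list_all_length k_def)
  have "nf n ((2*l)^cdepth (AndG cs)) (\<lambda>b. 1 - q b)" using q(1) by (simp add: M_def nf_one_minus)
  moreover have "2^l * card {b \<in> Pow {..<n}. 1 - q b \<noteq> ind (ceval (\<sigma> b) (AndG cs))} \<le> csize (AndG cs) * 2^n"
    using q(2) unfolding ev err_flip by (simp add: sum_list_nth k_def)
  ultimately show ?case by blast
next
  case (OrG cs)
  define k where "k = length cs"
  define M where "M = foldr max (map cdepth cs) 0"
  have "\<forall>i. \<exists>p. i < k \<longrightarrow> nf n ((2*l)^cdepth (cs!i)) p \<and>
      2^l * card {b \<in> Pow {..<n}. p b \<noteq> ind (ceval (\<sigma> b) (cs!i))} \<le> csize (cs!i) * 2^n"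
  proof
    fix i show "\<exists>p. i < k \<longrightarrow> nf n ((2*l)^cdepth (cs!i)) p \<and>
      2^l * card {b \<in> Pow {..<n}. p b \<noteq> ind (ceval (\<sigma> b) (cs!i))} \<le> csize (cs!i) * 2^n"
    proof (cases "i < k")
      case True
      then have "cs!i \<in> set cs" by (simp add: k_def)
      from OrG.IH[OF this] show ?thesis by blast
    next
      case False then show ?thesis by blast
    qed
  qed
  from choice[OF this] obtain P where P0: "\<forall>i. i < k \<longrightarrow> nf n ((2*l)^cdepth (cs!i)) (P i) \<and>
      2^l * card {b \<in> Pow {..<n}. P i b \<noteq> ind (ceval (\<sigma> b) (cs!i))} \<le> csize (cs!i) * 2^n"
    by blast
  note P = P0[rule_format]
  have H: "nf n ((2*l)^M) (P i) \<and>
      2^l * card {b \<in> Pow {..<n}. P i b \<noteq> ind (ceval (\<sigma> b) (cs!i))} \<le> csize (cs!i) * 2^n"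
    if i: "i < k" for i
  proof
    have "cdepth (cs!i) \<le> M" unfolding M_def using i by (intro foldr_max_ge) (simp add: k_def)
    then have pw: "(2*l)^cdepth (cs!i) \<le> (2*l)^M" using l by (intro power_increasing) auto
    have "nf n ((2*l)^cdepth (cs!i)) (P i)" using P[OF i] by blast
    then show "nf n ((2*l)^M) (P i)" using pw by (rule nf_mono)
    show "2^l * card {b \<in> Pow {..<n}. P i b \<noteq> ind (ceval (\<sigma> b) (cs!i))} \<le> csize (cs!i) * 2^n"
      using P[OF i] by simp
  qed
  obtain q where q: "nf n ((2*l)^Suc M) q"
    "2^l * card {b \<in> Pow {..<n}. q b \<noteq> ind (\<exists>i<k. ceval (\<sigma> b) (cs!i))} \<le> Suc (\<Sum>i<k. csize (cs!i)) * 2^n"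
    using or_circ[where k=k and l=l and M=M and P=P and n=n and t="\<lambda>i b. ceval (\<sigma> b) (cs!i)" and s="\<lambda>i. csize (cs!i)"] H by blast
  have ev: "ceval (\<sigma> b) (OrG cs) = (\<exists>i<k. ceval (\<sigma> b) (cs!i))" for b
    by (simp add: list_ex_length k_def)
  have "nf n ((2*l)^cdepth (OrG cs)) q" using q(1) by (simp add: M_def)
  moreover have "2^l * card {b \<in> Pow {..<n}. q b \<noteq> ind (ceval (\<sigma> b) (OrG cs))} \<le> csize (OrG cs) * 2^n"
    using q(2) unfolding ev by (simp add: sum_list_nth k_def)
  ultimately show ?case by blast
qed



lemma cb_step: "(Suc (Suc (2*m)) choose Suc m) * Suc m = 2 * Suc (2*m) * (2*m choose m)"
proof -
  have a: "Suc (Suc (2*m)) * (Suc (2*m) choose m) = (Suc (Suc (2*m)) choose Suc m) * Suc m"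
    by (rule Suc_times_binomial_eq)
  have b: "Suc (2*m) * (2*m choose m) = (Suc (2*m) choose Suc m) * Suc m"
    by (rule Suc_times_binomial_eq)
  have s: "(Suc (2*m) choose Suc m) = (Suc (2*m) choose m)"
    using binomial_symmetric[of "Suc m" "Suc (2*m)"] by simp
  have e: "(Suc (2*m) choose m) * Suc m = Suc (2*m) * (2*m choose m)"
    using b[unfolded s] by (rule sym)
  define X where "X = (Suc (Suc (2*m)) choose Suc m)"
  define Y where "Y = (Suc (2*m) choose m)"
  define Z where "Z = (2*m choose m)"
  have a': "Suc (Suc (2*m)) * Y = X * Suc m" using a unfolding X_def Y_def .
  have e': "Y * Suc m = Suc (2*m) * Z" using e unfolding Y_def Z_def .
  have "X * Suc m * Suc m = Suc (Suc (2*m)) * (Y * Suc m)" unfolding a'[symmetric] by (simp only: mult.assoc)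
  also have "\<dots> = Suc (Suc (2*m)) * (Suc (2*m) * Z)" using e' by simp
  also have "\<dots> = (2 * Suc (2*m) * Z) * Suc m" by simp
  finally have "(X * Suc m) * Suc m = (2 * Suc (2*m) * Z) * Suc m" .
  then have "X * Suc m = 2 * Suc (2*m) * Z" by (subst (asm) mult_cancel2) simp
  then show ?thesis unfolding X_def Z_def .
qed

lemma poly_ineq: "4*(2*m+1)^2*(3*m+4) \<le> 16*((m::nat)+1)^2*(3*m+1)"
  by (simp add: power2_eq_square algebra_simps)

lemma cb: "(2*m choose m)^2 * (3*m+1) \<le> 16^m"
proof (induction m)
  case 0 then show ?case by simp
next
  case (Suc m)
  define c where "c = 2*m choose m"
  define c' where "c' = Suc (Suc (2*m)) choose Suc m"
  have st: "c' * Suc m = 2 * Suc (2*m) * c" unfolding c_def c'_def by (rule cb_step)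
  have "c'^2 * (3*m+4) * (Suc m)^2 = (c' * Suc m)^2 * (3*m+4)"
    by (simp only: power_mult_distrib mult.commute mult.left_commute mult.assoc)
  also have "\<dots> = (2 * Suc (2*m) * c)^2 * (3*m+4)" unfolding st ..
  also have "\<dots> = 4*(2*m+1)^2*(3*m+4) * c^2" by (simp add: power2_eq_square algebra_simps)
  also have "\<dots> \<le> 16*(m+1)^2*(3*m+1) * c^2" by (intro mult_right_mono poly_ineq) simp
  also have "\<dots> = 16*(m+1)^2 * (c^2 * (3*m+1))" by (simp only: ac_simps)
  also have "\<dots> \<le> 16*(m+1)^2 * 16^m" using Suc.IH unfolding c_def by (intro mult_left_mono) auto
  finally have "c'^2 * (3*m+4) * (Suc m)^2 \<le> 16^Suc m * (Suc m)^2" by simp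
  then have "c'^2 * (3*m+4) \<le> 16^Suc m" by simp
  moreover have "2 * Suc m = Suc (Suc (2*m))" "3 * Suc m + 1 = 3*m+4" by simp_all
  ultimately show ?case unfolding c'_def by (simp only:)
qed

lemma Mon_bound:
  assumes n: "n = 2*m"
  shows "2 * card (Mon n (m + D)) \<le> 4^m + 2*(D+1)*(2*m choose m)"
proof -
  define L where "L = {T. T \<subseteq> {..<n} \<and> card T < m}"
  define H where "H = {T. T \<subseteq> {..<n} \<and> m \<le> card T \<and> card T \<le> m + D}"
  define cm where "cm T = {..<n} - T" for T
  have finL: "finite L" unfolding L_def by (rule finite_subset[of _ "Pow {..<n}"]) auto
  have finH: "finite H" unfolding H_def by (rule finite_subset[of _ "Pow {..<n}"]) auto
  have "Mon n (m + D) \<subseteq> L \<union> H" by (auto simp: Mon_def L_def H_def)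
  then have c1: "card (Mon n (m + D)) \<le> card L + card H"
    by (meson card_Un_le card_mono finH finL finite_UnI le_trans)
  have inj: "inj_on cm L"
    by (rule inj_on_inverseI[where g = cm]) (auto simp: cm_def L_def)
  have cmc: "card (cm T) = n - card T" if "T \<in> L" for T
    using that by (auto simp: cm_def L_def card_Diff_subset finite_subset)
  have disj: "L \<inter> cm ` L = {}"
  proof -
    have False if "T \<in> L" "cm T \<in> L" for T
    proof -
      have "card (cm T) \<ge> m" using cmc[OF that(1)] that(1) n by (auto simp: L_def)
      moreover have "card (cm T) < m" using that(2) by (simp add: L_def)
      ultimately show False by simp
    qed
    then show ?thesis by blast
  qed
  have "card L + card (cm ` L) = card (L \<union> cm ` L)"
    using disj finL by (intro card_Un_disjoint[symmetric]) auto
  also have "\<dots> \<le> card (Pow {..<n})" by (intro card_mono) (auto simp: L_def cm_def)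
  also have "\<dots> = 4^m" by (simp add: card_Pow n power_mult)
  finally have c2: "2 * card L \<le> 4^m" using card_image[OF inj] by simp
  have "H = (\<Union>j\<in>{m..m+D}. {T. T \<subseteq> {..<n} \<and> card T = j})" by (auto simp: H_def)
  then have "card H \<le> (\<Sum>j\<in>{m..m+D}. card {T. T \<subseteq> {..<n} \<and> card T = j})"
    by (simp add: card_UN_le)
  also have "\<dots> = (\<Sum>j\<in>{m..m+D}. n choose j)" by (simp add: n_subsets)
  also have "\<dots> \<le> (\<Sum>j\<in>{m..m+D}. 2*m choose m)"
    unfolding n by (intro sum_mono binomial_maximum')
  also have "\<dots> = (D+1) * (2*m choose m)" by simp
  finally have c3: "card H \<le> (D+1) * (2*m choose m)" .
  show ?thesis using c1 c2 c3 by linarith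
qed

lemma exists_l_aux: "\<exists>l\<ge>1. A * l^e \<le> (2::nat)^l"
proof -
  have "((\<lambda>l::nat. real A * real l ^ e / 2 ^ l) \<longlonglongrightarrow> 0)" by real_asymp
  then have "eventually (\<lambda>l. real A * real l ^ e / 2 ^ l < 1) sequentially"
    by (rule order_tendstoD) simp
  then obtain N where N: "\<And>l. l \<ge> N \<Longrightarrow> real A * real l ^ e / 2 ^ l < 1"
    by (auto simp: eventually_sequentially)
  define l where "l = max N 1"
  have "real A * real l ^ e / 2 ^ l < 1" using N by (simp add: l_def)
  then have "real A * real l ^ e < 2 ^ l" by (simp add: field_simps)
  then have "real (A * l ^ e) < real (2 ^ l)" by simp
  then have "A * l ^ e \<le> 2 ^ l" by linarith
  then show ?thesis by (intro exI[of _ l]) (simp add: l_def)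
qed

lemma exists_l: "\<exists>l\<ge>1. 8*c*(2*(16*(2*(2*l)^d+1)^2)+1)^(c+1) \<le> (2::nat)^l"
proof -
  obtain l where l: "l \<ge> 1" and b: "(8*c*289^(c+1)*2^(d*2*(c+1))) * l^(d*2*(c+1)) \<le> (2::nat)^l"
    using exists_l_aux by blast
  have p1: "1 \<le> (2*l)^d" using l by simp
  have "2*(2*l)^d+1 \<le> 3*(2*l)^d" using p1 by linarith
  then have "(2*(2*l)^d+1)^2 \<le> (3*(2*l)^d)^2" by (rule power_mono) simp
  then have "2*(16*(2*(2*l)^d+1)^2)+1 \<le> 2*(16*(3*(2*l)^d)^2)+1" by simp
  also have "\<dots> = 288*((2*l)^d)^2 + 1" by (simp add: power_mult_distrib)
  also have "\<dots> \<le> 289*((2*l)^d)^2" using p1 by (simp add: power2_eq_square)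
  finally have q: "2*(16*(2*(2*l)^d+1)^2)+1 \<le> 289*((2*l)^d)^2" .
  have "8*c*(2*(16*(2*(2*l)^d+1)^2)+1)^(c+1) \<le> 8*c*(289*((2*l)^d)^2)^(c+1)"
    by (intro mult_left_mono power_mono q) auto
  also have "(289*((2*l)^d)^2)^(c+1) = 289^(c+1) * (((2*l)^d)^2)^(c+1)"
    by (rule power_mult_distrib)
  also have "(((2*l)^d)^2)^(c+1) = (2*l)^(d*2*(c+1))" by (simp only: power_mult)
  also have "(2*l)^(d*2*(c+1)) = 2^(d*2*(c+1)) * l^(d*2*(c+1))" by (rule power_mult_distrib)
  also have "8 * c * (289 ^ (c + 1) * (2 ^ (d * 2 * (c + 1)) * l ^ (d * 2 * (c + 1))))
      = (8*c*289^(c+1)*2^(d*2*(c+1))) * l^(d*2*(c+1))" by (simp only: ac_simps)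
  also have "\<dots> \<le> 2^l" by (rule b)
  finally show ?thesis using l by blast
qed



lemma main_lb:
  fixes C :: "nat \<Rightarrow> 'v circ" and \<sigma> :: "nat \<Rightarrow> nat \<Rightarrow> nat set \<Rightarrow> 'v \<Rightarrow> bool"
  assumes dep: "\<And>N. cdepth (C N) \<le> d" and siz: "\<And>N. csize (C N) \<le> c * (N+1)^c"
    and vars: "\<And>N k v. nf N 1 (\<lambda>b. ind (\<sigma> N k b v))"
    and corr: "\<And>N k b. b \<subseteq> {..<N} \<Longrightarrow> ceval (\<sigma> N k b) (C N) = (card b \<le> k)"
  shows False
proof -
  obtain l where l: "1 \<le> l" and lbig: "8*c*(2*(16*(2*(2*l)^d+1)^2)+1)^(c+1) \<le> (2::nat)^l"
    using exists_l by blast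
  define D' where "D' = 2*(2*l)^d"
  define m where "m = 16*(D'+1)^2"
  define n where "n = 2*m"
  have lb2: "8*((n+1)*(c*(n+1)^c)) \<le> 2^l"
  proof -
    have e: "n+1 = 2*(16*(2*(2*l)^d+1)^2)+1" by (simp add: n_def m_def D'_def)
    have "8*((n+1)*(c*(n+1)^c)) = 8*c*(n+1)^(c+1)" by (simp only: power_add power_one_right ac_simps)
    also have "\<dots> \<le> 2^l" using lbig unfolding e[symmetric] .
    finally show ?thesis .
  qed
  have "\<forall>k. \<exists>p. k \<le> n \<longrightarrow> nf n ((2*l)^d) p \<and>
          2^l * card {b \<in> Pow {..<n}. p b \<noteq> ind (card b \<le> k)} \<le> c*(n+1)^c * 2^n"
  proof
    fix k
    obtain p where p: "nf n ((2*l)^cdepth (C n)) p"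
      "2^l * card {b \<in> Pow {..<n}. p b \<noteq> ind (ceval (\<sigma> n k b) (C n))} \<le> csize (C n) * 2^n"
      using approx[of n "\<sigma> n k" l "C n"] vars l by blast
    have "(2*l)^cdepth (C n) \<le> (2*l)^d" using dep l by (intro power_increasing) auto
    with p(1) have "nf n ((2*l)^d) p" by (rule nf_mono)
    moreover
    have eqs: "{b \<in> Pow {..<n}. p b \<noteq> ind (ceval (\<sigma> n k b) (C n))} = {b \<in> Pow {..<n}. p b \<noteq> ind (card b \<le> k)}"
      using corr by auto
    have csz: "csize (C n) * 2^n \<le> c*(n+1)^c * 2^n" using siz by (intro mult_right_mono) auto
    have "2^l * card {b \<in> Pow {..<n}. p b \<noteq> ind (card b \<le> k)} \<le> c*(n+1)^c * 2^n"
      using le_trans[OF p(2)[unfolded eqs] csz] .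
    ultimately show "\<exists>p. k \<le> n \<longrightarrow> nf n ((2*l)^d) p \<and>
          2^l * card {b \<in> Pow {..<n}. p b \<noteq> ind (card b \<le> k)} \<le> c*(n+1)^c * 2^n"
      by blast
  qed
  from choice[OF this] obtain p where p0: "\<forall>k. k \<le> n \<longrightarrow> nf n ((2*l)^d) (p k) \<and>
          2^l * card {b \<in> Pow {..<n}. p k b \<noteq> ind (card b \<le> k)} \<le> c*(n+1)^c * 2^n"
    by blast
  note p = p0[rule_format]
  define err where "err k = {b \<in> Pow {..<n}. p k b \<noteq> ind (card b \<le> k)}" for k
  define bad where "bad = (\<Union>k\<in>{..n}. err k)"
  have badsub: "bad \<subseteq> Pow {..<n}" by (auto simp: bad_def err_def)
  have cbad: "8 * card bad \<le> 2^n"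
  proof -
    have "card bad \<le> (\<Sum>k\<in>{..n}. card (err k))" unfolding bad_def by (rule card_UN_le) simp
    then have "2^l * card bad \<le> 2^l * (\<Sum>k\<in>{..n}. card (err k))"
      by (rule mult_le_mono2)
    also have "\<dots> = (\<Sum>k\<in>{..n}. 2^l * card (err k))"
      by (rule sum_distrib_left)
    also have "\<dots> \<le> (\<Sum>k\<in>{..n}. c*(n+1)^c * 2^n)"
      by (intro sum_mono) (use p in \<open>auto simp: err_def\<close>)
    also have "\<dots> = (n+1) * (c*(n+1)^c) * 2^n" by (simp add: algebra_simps)
    finally have "2^l * card bad \<le> (n+1) * (c*(n+1)^c) * 2^n" .
    then have "8 * (2^l * card bad) \<le> 8 * ((n+1) * (c*(n+1)^c) * 2^n)" by (rule mult_le_mono2)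
    also have "\<dots> = 8 * ((n+1) * (c*(n+1)^c)) * 2^n" by (simp only: mult.assoc)
    also have "\<dots> \<le> 2^l * 2^n" using lb2 by (intro mult_right_mono) auto
    finally have "2^l * (8 * card bad) \<le> 2^l * 2^n" by (simp add: ac_simps)
    then show ?thesis by simp
  qed
  define J where "J = {j. j \<le> n \<and> odd j}"
  have finJ: "finite J" by (simp add: J_def)
  define P where "P b = (\<Sum>j\<in>J. p j b * (1 - p (j-1) b))" for b
  have nfP: "nf n D' P"
  proof -
    have "nf n D' (\<lambda>b. \<Sum>j\<in>J. p j b * (1 - p (j-1) b))"
    proof (rule nf_sum[OF finJ])
      fix j assume j: "j \<in> J"
      then have "j \<le> n" "j - 1 \<le> n" by (auto simp: J_def)
      then have "nf n ((2*l)^d + (2*l)^d) (\<lambda>b. p j b * (1 - p (j-1) b))"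
        using p by (intro nf_mult nf_one_minus) auto
      then show "nf n D' (\<lambda>b. p j b * (1 - p (j-1) b))" by (simp add: D'_def mult_2)
    qed
    then show ?thesis by (simp add: P_def[abs_def])
  qed
  define G where "G = Pow {..<n} - bad"
  have PG: "\<forall>b\<in>G. P b = ind (odd (card b))"
  proof
    fix b assume b: "b \<in> G"
    then have bn: "b \<subseteq> {..<n}" by (auto simp: G_def)
    have cb: "card b \<le> n" using card_mono[OF _ bn] by simp
    have pk: "p k b = ind (card b \<le> k)" if "k \<le> n" for k
      using b that by (auto simp: G_def bad_def err_def)
    have "P b = (\<Sum>j\<in>J. if j = card b then 1 else 0)" unfolding P_def
    proof (rule sum.cong)
      fix j assume j: "j \<in> J"
      then have j1: "j \<le> n" "j - 1 \<le> n" "j \<ge> 1" by (auto simp: J_def elim: oddE)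
      show "p j b * (1 - p (j-1) b) = (if j = card b then 1 else 0)"
        using j1 by (auto simp: pk ind_def)
    qed simp
    also have "\<dots> = (if card b \<in> J then 1 else 0)" using finJ by (simp add: sum.delta')
    also have "\<dots> = ind (odd (card b))" using cb by (simp add: J_def ind_def)
    finally show "P b = ind (odd (card b))" .
  qed
  have rep: "\<And>g. \<exists>f. nf n (m + D') f \<and> (\<forall>b\<in>G. f b = g b)"
    using degree_reduce[OF nfP PG _ n_def] by (auto simp: G_def)
  have cG: "card G \<le> card (Mon n (m + D'))"
    by (rule count_bound[OF _ rep]) (auto simp: G_def)
  have cM: "2 * card (Mon n (m + D')) \<le> 4^m + 2*(D'+1)*(2*m choose m)"
    by (rule Mon_bound[OF n_def])
  have cbm: "4*(D'+1)*(2*m choose m) \<le> 4^m"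
  proof -
    have "(4*(D'+1)*(2*m choose m))^2 = 16*(D'+1)^2 * (2*m choose m)^2"
      by (simp only: power_mult_distrib) simp
    also have "\<dots> \<le> (3*m+1) * (2*m choose m)^2" by (intro mult_right_mono) (auto simp: m_def)
    also have "\<dots> \<le> 16^m" using cb[of m] by (simp add: mult.commute)
    also have "\<dots> = (4^m)^2" by (simp add: power2_eq_square power_mult_distrib[symmetric])
    finally show ?thesis by (rule power2_le_imp_le) simp
  qed
  have n4: "(2::nat)^n = 4^m" by (simp add: n_def power_mult)
  have cbp: "card bad \<le> 2^n"
    using card_mono[OF _ badsub] by (simp add: card_Pow)
  have finbad: "finite bad" using badsub finite_subset by blast
  have "card G = 2^n - card bad"
    unfolding G_def using card_Diff_subset[OF finbad badsub] by (simp add: card_Pow)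
  then have cardG: "card G + card bad = 4^m" using cbp n4 by simp
  have pos: "(0::nat) < 4^m" by simp
  show False using cG cM cbm cardG cbad n4 pos by linarith
qed

lemma edge_norm_loops:
  assumes "finite b"
  shows "edge_norm {(i, i) | i. i \<in> b} = card b"
proof -
  have "{{u, v} | u v. (u, v) \<in> {(i, i) | i. i \<in> b}} = (\<lambda>i. {i}) ` b" by auto
  moreover have "inj_on (\<lambda>i. {i}) b" by (auto simp: inj_on_def)
  ultimately show ?thesis by (simp add: edge_norm_def card_image)
qed

lemma edge_norm_lower:
  assumes S: "S \<subseteq> V \<times> V" "finite V" and b: "\<forall>i\<in>b. (i, i) \<in> S"
  shows "card b \<le> edge_norm S"
proof -
  have fin: "finite {{u, v} | u v. (u, v) \<in> S}"
  proof -
    have "{{u, v} | u v. (u, v) \<in> S} = (\<lambda>(u, v). {u, v}) ` S" by auto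
    moreover have "finite S" using S finite_subset by blast
    ultimately show ?thesis by simp
  qed
  have "(\<lambda>i. {i}) ` b \<subseteq> {{u, v} | u v. (u, v) \<in> S}" using b by force
  then have "card ((\<lambda>i. {i}) ` b) \<le> edge_norm S" unfolding edge_norm_def by (rule card_mono[OF fin])
  moreover have "inj_on (\<lambda>i. {i}) b" by (auto simp: inj_on_def)
  ultimately show ?thesis by (simp add: card_image)
qed

theorem lemma4p4:
  shows "\<forall>m \<in> {Del, Add, Edit}. \<exists>\<phi>. in_frag_a \<phi> \<and>
           \<not> graph_problem_in_AC0 (RM_undir m \<phi>)"
proof
  fix md assume md: "md \<in> {Del, Add, Edit}"
  define \<phi> where "\<phi> = (if md = Del then FAll 0 (FNot (EAtom 0 0)) else FAll 0 (EAtom 0 0))"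
  define Eg where "Eg N b = (if md = Del then {(i, i) | i. i \<in> b} else {(i, i) | i. i < N \<and> i \<notin> b})"
    for N :: nat and b :: "nat set"
  have frag: "in_frag_a \<phi>" by (auto simp: in_frag_a_def \<phi>_def)
  have und: "undirected {0..<N} (Eg N b)" if "b \<subseteq> {..<N}" for N b
    using that by (auto simp: undirected_def Eg_def sym_def)
  have rm: "RM_undir md \<phi> {0..<N} (Eg N b) k = (card b \<le> k)" if bN: "b \<subseteq> {..<N}" for N b k
  proof
    assume "RM_undir md \<phi> {0..<N} (Eg N b) k"
    then obtain S where S: "S \<subseteq> {0..<N} \<times> {0..<N}" "edge_norm S \<le> k" "mode_ok md (Eg N b) S"
      "models {0..<N} ((Eg N b - S) \<union> (S - Eg N b)) \<phi>"
      unfolding RM_undir_def by blast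
    have "\<forall>i\<in>b. (i, i) \<in> S"
    proof
      fix i assume i: "i \<in> b"
      then have iN: "i \<in> {0..<N}" using bN by auto
      show "(i, i) \<in> S"
      proof (cases "md = Del")
        case True
        then have "(i, i) \<notin> (Eg N b - S) \<union> (S - Eg N b)" using S(4) iN
          by (auto simp: models_def \<phi>_def)
        moreover have "(i, i) \<in> Eg N b" using True i by (auto simp: Eg_def)
        ultimately show ?thesis by blast
      next
        case False
        then have "(i, i) \<in> (Eg N b - S) \<union> (S - Eg N b)" using S(4) iN
          by (auto simp: models_def \<phi>_def)
        moreover have "(i, i) \<notin> Eg N b" using False i by (auto simp: Eg_def)
        ultimately show ?thesis by blast
      qed
    qed
    then have "card b \<le> edge_norm S" using S(1) by (intro edge_norm_lower) auto
    then show "card b \<le> k" using S(2) by linarith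
  next
    assume kb: "card b \<le> k"
    define S where "S = {(i, i) | i. i \<in> b}"
    have finb: "finite b" using bN finite_subset by blast
    have S1: "S \<subseteq> {0..<N} \<times> {0..<N}" using bN by (auto simp: S_def)
    have S2: "edge_norm S \<le> k" using kb edge_norm_loops[OF finb] by (simp add: S_def)
    have S3: "mode_ok md (Eg N b) S" using md by (auto simp: mode_ok_def Eg_def S_def)
    have res: "(Eg N b - S) \<union> (S - Eg N b) = (if md = Del then {} else {(i, i) | i. i < N})"
      using bN by (auto simp: Eg_def S_def)
    have S4: "undirected {0..<N} ((Eg N b - S) \<union> (S - Eg N b))"
      unfolding res by (auto simp: undirected_def sym_def)
    have S5: "models {0..<N} ((Eg N b - S) \<union> (S - Eg N b)) \<phi>"
      unfolding res by (auto simp: models_def \<phi>_def)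
    show "RM_undir md \<phi> {0..<N} (Eg N b) k"
      unfolding RM_undir_def using S1 S2 S3 S4 S5 by blast
  qed
  have "\<not> graph_problem_in_AC0 (RM_undir md \<phi>)"
  proof
    assume "graph_problem_in_AC0 (RM_undir md \<phi>)"
    then obtain C d c where H: "\<And>N. cdepth (C N) \<le> d \<and> csize (C N) \<le> c * (N + 1) ^ c \<and>
        (\<forall>E k. undirected {0..<N} E \<longrightarrow> (ceval (enc N E k) (C N) \<longleftrightarrow> RM_undir md \<phi> {0..<N} E k))"
      unfolding graph_problem_in_AC0_def by blast
    show False
    proof (rule main_lb[where C = C and d = d and c = c and \<sigma> = "\<lambda>N k b. enc N (Eg N b) k"])
      show "cdepth (C N) \<le> d" for N using H by blast
      show "csize (C N) \<le> c * (N + 1) ^ c" for N using H by blast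
      show "ceval (enc N (Eg N b) k) (C N) = (card b \<le> k)" if "b \<subseteq> {..<N}" for N k b
        using H[of N] und[OF that] rm[OF that] by blast
      show "nf N 1 (\<lambda>b. ind (enc N (Eg N b) k v))" for N k v
      proof (cases v)
        case (Inr t)
        then show ?thesis by (simp add: enc_def nf_const)
      next
        case (Inl ij)
        obtain i j where ij: "ij = (i, j)" by fastforce
        show ?thesis
        proof (cases "i = j \<and> i < N")
          case True
          show ?thesis
          proof (cases "md = Del")
            case True2: True
            have "(\<lambda>b. ind (enc N (Eg N b) k v)) = (\<lambda>b. ind (i \<in> b))"
              using True True2 Inl ij by (auto simp: enc_def Eg_def)
            then show ?thesis by (simp only:) (rule nf_var)
          next
            case False2: False
            have "(\<lambda>b. ind (enc N (Eg N b) k v)) = (\<lambda>b. 1 - ind (i \<in> b))"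
              using True False2 Inl ij by (auto simp: enc_def Eg_def ind_def)
            then show ?thesis by (simp only:) (rule nf_one_minus[OF nf_var])
          qed
        next
          case False
          have "(\<lambda>b. ind (enc N (Eg N b) k v)) = (\<lambda>b. 0)"
            using False Inl ij by (auto simp: enc_def Eg_def ind_def)
          then show ?thesis by (simp only:) (rule nf_const)
        qed
      qed
    qed
  qed
  with frag show "\<exists>\<phi>. in_frag_a \<phi> \<and> \<not> graph_problem_in_AC0 (RM_undir md \<phi>)" by blast
qed


end
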